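(* Let $X\in\mathbf{R}^{n\times p}$ with rows $x_1,\dots,x_n\in\mathbf{R}^p$, let $P=\operatorname{conv}\{x_1,\dots,x_n\}$, and let $h_1,\dots,h_k$ be the extreme points of $P$. For each $i$ let $\omega_i=\Pr(z\in N_P(h_i))$, $z\sim\mathcal{N}(0,I_p)$, be the solid angle of the normal cone of $P$ at $h_i$. Consider the following procedure (the proto-algorithm): generate a $p\times m$ random matrix $G$ with independent standard normal entries, form $XG$, let $I_{\max}$ and $I_{\min}$ be the sets of row indices attaining the maximum and the minimum, respectively, in each column of $XG$, and return the rows of $X$ indexed by $I_{\max}\cup I_{\min}$. Let $\delta\in(0,1)$. If $$m>\kappa\log\left(\frac{k}{\delta}\right),\qquad \kappa=\frac{1}{\log\left(\frac{1}{\max_i(1-2\omega_i)}\right)},$$ then with probability at least $1-\delta$ the returned rows include all $k$ extreme points $h_1,\dots,h_k$.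
   Context: For a convex set $C\subset\mathbf{R}^p$ and $x\in C$, the normal cone is $N_C(x)=\{w\in\mathbf{R}^p : w^T(y-x)\le 0\text{ for all }y\in C\}$. The solid angle of a cone $K\subset\mathbf{R}^p$ (full-dimensional) is $\omega(K)=\Pr(z\in K)$ for $z\sim\mathcal{N}(0,I_p)$. *)

theory Defs
  imports "HOL-Probability.Probability"
begin

definition normal_cone :: "'a::euclidean_space set \<Rightarrow> 'a \<Rightarrow> 'a set" where
  "normal_cone C x = {w. \<forall>y\<in>C. w \<bullet> (y - x) \<le> 0}"

definition std_gaussian :: "'a::euclidean_space measure" where
  "std_gaussian = density lborel (\<lambda>z. \<Prod>b\<in>Basis. ennreal (std_normal_density (z \<bullet> b)))"

definition solid_angle :: "'a::euclidean_space set \<Rightarrow> real" where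
  "solid_angle K = measure std_gaussian K"

text \<open>Output of the proto-algorithm: the rows x_i (i<n) that attain the maximum or the
  minimum of the column j of XG, for some column j<m; G j is the j-th column of G.\<close>
definition proto_output :: "nat \<Rightarrow> (nat \<Rightarrow> 'a::euclidean_space) \<Rightarrow> nat \<Rightarrow> (nat \<Rightarrow> 'a) \<Rightarrow> 'a set" where
  "proto_output n x m G =
     {x i | i j. i < n \<and> j < m \<and>
        (x i \<bullet> G j = Max ((\<lambda>l. x l \<bullet> G j) ` {..<n}) \<or>
         x i \<bullet> G j = Min ((\<lambda>l. x l \<bullet> G j) ` {..<n}))}"

end

theory Submission imports Defs begin

lemma sets_std_gaussian[simp, measurable_cong]: "sets std_gaussian = sets borel"
  by (simp add: std_gaussian_def)
lemma space_std_gaussian[simp]: "space std_gaussian = UNIV"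
  by (simp add: std_gaussian_def)

lemma std_gaussian_density_meas[measurable]:
  "(\<lambda>z::'a::euclidean_space. \<Prod>b\<in>Basis. ennreal (std_normal_density (z \<bullet> b))) \<in> borel_measurable borel"
  by measurable

lemma prob_space_std_gaussian: "prob_space (std_gaussian :: 'a::euclidean_space measure)"
proof
  have "emeasure std_gaussian (space std_gaussian :: 'a set)
      = (\<integral>\<^sup>+z. (\<Prod>b\<in>Basis. ennreal (std_normal_density (z \<bullet> b))) \<partial>(lborel::'a measure))"
    by (simp add: std_gaussian_def emeasure_density)
  also have "\<dots> = (\<Prod>b\<in>(Basis::'a set). (\<integral>\<^sup>+x. ennreal (std_normal_density x) \<partial>lborel))"
    by (rule nn_integral_lborel_prod) auto
  also have "(\<integral>\<^sup>+x. ennreal (std_normal_density x) \<partial>lborel) = 1"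
  proof -
    interpret prob_space "density lborel (normal_density 0 (1::real))" using prob_space_normal_density[of 1 0] by simp
    show ?thesis using emeasure_space_1 by (simp add: emeasure_density)
  qed
  finally show "emeasure std_gaussian (space std_gaussian :: 'a set) = 1" by simp
qed

lemma lborel_uminus: "(lborel :: 'a::euclidean_space measure) = distr lborel borel uminus"
  using lborel_affine[of "-1" "0::'a"] by (simp add: density_1)

lemma std_gaussian_uminus:
  assumes [measurable]: "A \<in> sets borel"
  shows "emeasure std_gaussian (uminus ` A) = emeasure (std_gaussian :: 'a::euclidean_space measure) A"
proof -
  have um: "uminus ` A = {z. - z \<in> A}" by (auto simp: image_iff) (metis minus_minus)
  have [measurable]: "{z. - z \<in> A} \<in> sets (borel :: 'a measure)" by measurable
  have "emeasure std_gaussian (uminus ` A) = (\<integral>\<^sup>+z. (\<Prod>b\<in>Basis. ennreal (std_normal_density (z \<bullet> b))) * indicator {z. - z \<in> A} z \<partial>(lborel :: 'a measure))"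
    by (simp add: um std_gaussian_def emeasure_density)
  also have "\<dots> = (\<integral>\<^sup>+z. (\<Prod>b\<in>Basis. ennreal (std_normal_density (z \<bullet> b))) * indicator {z. - z \<in> A} z \<partial>(distr lborel borel uminus :: 'a measure))"
    by (subst lborel_uminus) (rule refl)
  also have "\<dots> = (\<integral>\<^sup>+z. (\<Prod>b\<in>Basis. ennreal (std_normal_density (z \<bullet> b))) * indicator A z \<partial>(lborel :: 'a measure))"
    by (subst nn_integral_distr) (auto simp: normal_density_def indicator_def)
  also have "\<dots> = emeasure std_gaussian A"
    by (simp add: std_gaussian_def emeasure_density)
  finally show ?thesis .
qed

lemma std_gaussian_emeasure:
  assumes [measurable]: "A \<in> sets borel"
  shows "emeasure std_gaussian A = (\<integral>\<^sup>+z. (\<Prod>b\<in>Basis. ennreal (std_normal_density (z \<bullet> b))) * indicator A z \<partial>(lborel :: 'a::euclidean_space measure))"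
  by (simp add: std_gaussian_def emeasure_density)

lemma std_gaussian_null:
  assumes [measurable]: "A \<in> null_sets (lborel :: 'a::euclidean_space measure)"
  shows "emeasure std_gaussian A = 0"
proof -
  have [measurable]: "A \<in> sets borel" using assms by (auto simp: null_sets_def)
  have "AE z in (lborel :: 'a measure). z \<notin> A"
    using AE_not_in[OF assms] .
  then have "AE z in (lborel :: 'a measure). (\<Prod>b\<in>Basis. ennreal (std_normal_density (z \<bullet> b))) * indicator A z = 0"
    by eventually_elim simp
  then show ?thesis
    by (simp add: std_gaussian_emeasure nn_integral_0_iff_AE)
qed

lemma std_gaussian_hyperplane_null:
  fixes a :: "'a::euclidean_space"
  assumes "a \<noteq> 0"
  shows "emeasure std_gaussian {w. a \<bullet> w = 0} = 0"
proof -
  have "negligible {w. a \<bullet> w = 0}" using negligible_hyperplane[of a 0] assms by simp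
  then have "{w. a \<bullet> w = 0} \<in> null_sets lebesgue" by (simp add: negligible_iff_null_sets)
  moreover have "{w. a \<bullet> w = 0} \<in> sets (borel :: 'a measure)" by measurable
  ultimately have "{w. a \<bullet> w = 0} \<in> null_sets (lborel :: 'a measure)"
    by (simp add: null_sets_completion_iff)
  then show ?thesis by (rule std_gaussian_null)
qed

lemma std_normal_pos: "std_normal_density x > 0"
  by (rule normal_density_pos) simp

lemma std_gaussian_ball_pos:
  fixes c :: "'a::euclidean_space"
  assumes "r > 0" "ball c r \<subseteq> K" and [measurable]: "K \<in> sets borel"
  shows "emeasure std_gaussian K > 0"
proof (rule ccontr)
  assume "\<not> emeasure std_gaussian K > 0"
  then have "emeasure std_gaussian K = 0" by (simp add: not_gr_zero)
  then have "AE z in (lborel :: 'a measure). (\<Prod>b\<in>Basis. ennreal (std_normal_density (z \<bullet> b))) * indicator K z = 0"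
    by (simp add: std_gaussian_emeasure nn_integral_0_iff_AE)
  then have "AE z in (lborel :: 'a measure). z \<notin> K"
    by eventually_elim (auto simp: indicator_def prod_zero_iff split: if_splits, metis std_normal_pos less_irrefl)
  then have "emeasure lborel K = 0"
    by (subst (asm) AE_iff_measurable[of K]) auto
  then have "emeasure lborel (ball c r) = 0"
    using emeasure_mono[of "ball c r" K lborel] assms by (simp add: le_zero_eq)
  then have "measure lborel (ball c r) = 0" by (simp add: measure_def)
  with content_ball_pos[OF assms(1), of c] show False by simp
qed

lemma normal_cone_closed: "closed (normal_cone C x)"
proof -
  have "normal_cone C x = (\<Inter>y\<in>C. {w. inner (y - x) w \<le> 0})"
    by (auto simp: normal_cone_def inner_commute)
  then show ?thesis by (auto intro!: closed_INT closed_halfspace_le)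
qed

lemma normal_cone_borel[measurable]: "normal_cone C x \<in> sets borel"
  by (rule borel_closed[OF normal_cone_closed])

lemma normal_cone_hull:
  fixes S :: "'a::euclidean_space set"
  shows "normal_cone (convex hull S) h = {w. \<forall>y\<in>S. w \<bullet> (y - h) \<le> 0}"
proof
  show "normal_cone (convex hull S) h \<subseteq> {w. \<forall>y\<in>S. w \<bullet> (y - h) \<le> 0}"
    using hull_subset[of S convex] by (auto simp: normal_cone_def)
next
  show "{w. \<forall>y\<in>S. w \<bullet> (y - h) \<le> 0} \<subseteq> normal_cone (convex hull S) h"
  proof
    fix w assume w: "w \<in> {w. \<forall>y\<in>S. w \<bullet> (y - h) \<le> 0}"
    have "convex {y. w \<bullet> y \<le> w \<bullet> h}" by (rule convex_halfspace_le)
    moreover have "S \<subseteq> {y. w \<bullet> y \<le> w \<bullet> h}" using w by (auto simp: inner_diff_right)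
    ultimately have "convex hull S \<subseteq> {y. w \<bullet> y \<le> w \<bullet> h}" by (metis hull_minimal)
    then show "w \<in> normal_cone (convex hull S) h" by (auto simp: normal_cone_def inner_diff_right)
  qed
qed

lemma extreme_not_in_hull_rest:
  fixes S :: "'a::euclidean_space set"
  assumes "h extreme_point_of (convex hull S)"
  shows "h \<notin> convex hull (S - {h})"
proof -
  have "convex (convex hull S - {h})"
    using assms extreme_point_of_stillconvex[of "convex hull S" h] by simp
  moreover have "S - {h} \<subseteq> convex hull S - {h}" using hull_subset[of S convex] by auto
  ultimately have "convex hull (S - {h}) \<subseteq> convex hull S - {h}" by (metis hull_minimal)
  then show ?thesis by auto
qed

lemma extreme_normal_cone_open:
  fixes S :: "'a::euclidean_space set"
  assumes "finite S" "h extreme_point_of (convex hull S)"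
  shows "\<exists>c r. r > 0 \<and> ball c r \<subseteq> normal_cone (convex hull S) h"
proof -
  define T where "T = S - {h}"
  have fT: "finite T" using assms(1) by (simp add: T_def)
  have hT: "h \<notin> convex hull T" using extreme_not_in_hull_rest[OF assms(2)] by (simp add: T_def)
  have "compact (convex hull T)" using fT by (simp add: compact_convex_hull finite_imp_compact)
  then obtain a b where ab: "inner a h < b" "\<forall>y\<in>convex hull T. inner a y > b"
    using separating_hyperplane_closed_point[of "convex hull T" h] hT
    by (auto simp: compact_imp_closed)
  define U where "U = (\<Inter>y\<in>T. {w. inner (y - h) w < 0})"
  have "open U" unfolding U_def using fT by (auto intro!: open_INT open_halfspace_lt)
  moreover have "- a \<in> U"
    unfolding U_def
  proof (intro InterI, clarsimp)
    fix y assume "y \<in> T"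
    then have "y \<in> convex hull T" using hull_subset[of T convex] by auto
    then have "inner a y > b" using ab by auto
    then show "(y - h) \<bullet> a > 0" using ab(1) by (simp add: inner_diff_left inner_diff_right inner_commute)
  qed
  ultimately obtain r where r: "r > 0" "ball (- a) r \<subseteq> U" by (meson openE)
  have "U \<subseteq> normal_cone (convex hull S) h"
    unfolding normal_cone_hull U_def T_def by (force simp: inner_commute)
  with r show ?thesis by blast
qed

lemma omega_pos:
  fixes S :: "'a::euclidean_space set"
  assumes "finite S" "h extreme_point_of (convex hull S)"
  shows "solid_angle (normal_cone (convex hull S) h) > 0"
proof -
  obtain c r where "r > 0" "ball c r \<subseteq> normal_cone (convex hull S) h"
    using extreme_normal_cone_open[OF assms] by blast
  then have "emeasure std_gaussian (normal_cone (convex hull S) h) > 0"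
    by (intro std_gaussian_ball_pos) auto
  moreover interpret prob_space "std_gaussian :: 'a measure" by (rule prob_space_std_gaussian)
  show ?thesis using calculation
    by (simp add: solid_angle_def emeasure_eq_measure)
qed

lemma all_in_eq:
  "{G \<in> space (PiM {..<m} (\<lambda>_. std_gaussian :: 'a::euclidean_space measure)). \<forall>j<m. G j \<in> C}
           = PiE {..<m} (\<lambda>_. C)"
proof -
  have sp: "space (PiM {..<m} (\<lambda>_. std_gaussian :: 'a measure)) = PiE {..<m} (\<lambda>_. UNIV)"
    by (simp add: space_PiM)
  show ?thesis unfolding sp PiE_def Pi_def by blast
qed

lemma PiM_all_in:
  assumes [measurable]: "C \<in> sets borel"
  shows "measure (PiM {..<m} (\<lambda>_. std_gaussian :: 'a::euclidean_space measure))
           {G \<in> space (PiM {..<m} (\<lambda>_. std_gaussian :: 'a measure)). \<forall>j<m. G j \<in> C}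
         = (measure std_gaussian C) ^ m"
proof -
  interpret G: prob_space "std_gaussian :: 'a measure" by (rule prob_space_std_gaussian)
  interpret PS: product_sigma_finite "\<lambda>_::nat. std_gaussian :: 'a measure"
    unfolding product_sigma_finite_def using prob_space_imp_sigma_finite[OF prob_space_std_gaussian] by blast
  have eq: "{G \<in> space (PiM {..<m} (\<lambda>_. std_gaussian :: 'a measure)). \<forall>j<m. G j \<in> C}
           = PiE {..<m} (\<lambda>_. C)"
  proof -
    have sp: "space (PiM {..<m} (\<lambda>_. std_gaussian :: 'a measure)) = PiE {..<m} (\<lambda>_. UNIV)"
      by (simp add: space_PiM)
    show ?thesis unfolding sp PiE_def Pi_def by blast
  qed
  have "emeasure (PiM {..<m} (\<lambda>_. std_gaussian :: 'a measure)) (PiE {..<m} (\<lambda>_. C))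
      = (\<Prod>i\<in>{..<m}. emeasure std_gaussian C)"
    by (rule PS.emeasure_PiM) simp_all
  also have "\<dots> = ennreal ((measure std_gaussian C) ^ m)"
    by (simp add: G.emeasure_eq_measure prod_ennreal ennreal_power)
  finally have "emeasure (PiM {..<m} (\<lambda>_. std_gaussian :: 'a measure)) (PiE {..<m} (\<lambda>_. C)) = ennreal ((measure std_gaussian C) ^ m)" .
  then have "measure (PiM {..<m} (\<lambda>_. std_gaussian :: 'a measure)) (PiE {..<m} (\<lambda>_. C)) = (measure std_gaussian C) ^ m"
    unfolding measure_def[of "PiM _ _"] by (metis enn2real_ennreal measure_nonneg zero_le_power)
  then show ?thesis unfolding eq .
qed

lemma key_arith:
  fixes Q \<delta> :: real and k m :: nat
  assumes "0 \<le> Q" "Q < 1" "0 < \<delta>" "k \<ge> 1" "m > 0"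
    and "real m > (1 / ln (1 / Q)) * ln (real k / \<delta>)"
  shows "real k * Q ^ m \<le> \<delta>"
proof (cases "Q = 0")
  case True then show ?thesis using assms by (simp add: zero_power)
next
  case False
  then have Qp: "Q > 0" using assms by simp
  have l: "ln (1 / Q) > 0" using Qp assms by simp
  have "real m * ln (1 / Q) > ln (real k / \<delta>)"
  proof -
    have "ln (real k / \<delta>) / ln (1 / Q) < real m" using assms(6) by simp
    then show ?thesis using l by (simp add: divide_less_eq)
  qed
  then have "ln (Q ^ m) < ln (\<delta> / real k)"
  proof -
    have "ln (Q ^ m) = - (real m * ln (1 / Q))" using Qp by (simp add: ln_realpow ln_div)
    moreover have "ln (\<delta> / real k) = - ln (real k / \<delta>)" using assms by (simp add: ln_div)
    ultimately show ?thesis using \<open>real m * ln (1 / Q) > ln (real k / \<delta>)\<close> by simp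
  qed
  then have "Q ^ m < \<delta> / real k"
    using Qp assms by (simp add: ln_less_cancel_iff)
  then have "Q ^ m * real k < \<delta>" using assms by (simp add: less_divide_eq)
  then show ?thesis by (simp add: mult.commute)
qed


lemma q_eq:
  fixes S :: "'a::euclidean_space set"
  assumes "y \<in> S" "y \<noteq> h"
  defines "N \<equiv> normal_cone (convex hull S) h"
  shows "measure std_gaussian (UNIV - (N \<union> uminus ` N)) = 1 - 2 * solid_angle N"
proof -
  interpret G: prob_space "std_gaussian :: 'a measure" by (rule prob_space_std_gaussian)
  have [measurable]: "N \<in> sets borel" unfolding N_def by measurable
  have um: "uminus ` N = {z. - z \<in> N}" by (auto simp: image_iff) (metis minus_minus)
  have [measurable]: "uminus ` N \<in> sets borel" unfolding um by measurable
  have sub: "N \<inter> uminus ` N \<subseteq> {w. (y - h) \<bullet> w = 0}"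
  proof
    fix w assume w: "w \<in> N \<inter> uminus ` N"
    then have "w \<bullet> (y - h) \<le> 0" using assms hull_subset[of S convex]
      by (auto simp: N_def normal_cone_def)
    moreover from w have "(- w) \<bullet> (y - h) \<le> 0" using assms hull_subset[of S convex]
      by (auto simp: N_def normal_cone_def um)
    ultimately show "w \<in> {w. (y - h) \<bullet> w = 0}" by (simp add: inner_commute)
  qed
  have "emeasure std_gaussian (N \<inter> uminus ` N) \<le> emeasure std_gaussian {w. (y - h) \<bullet> w = 0}"
    by (rule emeasure_mono[OF sub]) measurable
  also have "\<dots> = 0" using assms by (intro std_gaussian_hyperplane_null) simp
  finally have n0: "measure std_gaussian (N \<inter> uminus ` N) = 0"
    by (simp add: G.emeasure_eq_measure)
  have sym: "measure std_gaussian (uminus ` N) = measure std_gaussian N"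
    using std_gaussian_uminus[of N] by (simp add: G.emeasure_eq_measure)
  have "measure std_gaussian (N \<union> uminus ` N) = measure std_gaussian N + measure std_gaussian (uminus ` N) - measure std_gaussian (N \<inter> uminus ` N)"
    by (rule measure_Un3) (simp_all add: G.fmeasurable_eq_sets)
  then have "measure std_gaussian (N \<union> uminus ` N) = 2 * solid_angle N"
    using n0 sym by (simp add: solid_angle_def)
  moreover have "measure std_gaussian (UNIV - (N \<union> uminus ` N)) = 1 - measure std_gaussian (N \<union> uminus ` N)"
    using G.prob_compl[of "N \<union> uminus ` N"] by simp
  ultimately show ?thesis by simp
qed

lemma hit_output:
  fixes x :: "nat \<Rightarrow> 'a::euclidean_space"
  assumes "h extreme_point_of (convex hull (x ` {..<n}))" "j < m"
    and "G j \<in> normal_cone (convex hull (x ` {..<n})) h \<union> uminus ` normal_cone (convex hull (x ` {..<n})) h"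
  shows "h \<in> proto_output n x m G"
proof -
  have "h \<in> x ` {..<n}" using extreme_point_of_convex_hull[OF assms(1)] .
  then obtain i where i: "i < n" "h = x i" by auto
  let ?V = "(\<lambda>l. x l \<bullet> G j) ` {..<n}"
  have fin: "finite ?V" by simp
  have hin: "x i \<bullet> G j \<in> ?V" using i by auto
  have S: "\<And>l. l < n \<Longrightarrow> x l \<in> convex hull (x ` {..<n})"
    using hull_subset[of "x ` {..<n}" convex] by auto
  from assms(3) have "x i \<bullet> G j = Max ?V \<or> x i \<bullet> G j = Min ?V"
  proof
    assume g: "G j \<in> normal_cone (convex hull (x ` {..<n})) h"
    have "\<forall>v\<in>?V. v \<le> x i \<bullet> G j"
    proof
      fix v assume "v \<in> ?V"
      then obtain l where l: "l < n" "v = x l \<bullet> G j" by auto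
      have "G j \<bullet> (x l - h) \<le> 0" using g S[OF l(1)] by (auto simp: normal_cone_def)
      then show "v \<le> x i \<bullet> G j" using l i by (simp add: inner_diff_right inner_commute)
    qed
    then have "Max ?V = x i \<bullet> G j" using fin hin by (intro Max_eqI) auto
    then show ?thesis by simp
  next
    assume "G j \<in> uminus ` normal_cone (convex hull (x ` {..<n})) h"
    then obtain g where g: "g \<in> normal_cone (convex hull (x ` {..<n})) h" "G j = - g" by auto
    have "\<forall>v\<in>?V. x i \<bullet> G j \<le> v"
    proof
      fix v assume "v \<in> ?V"
      then obtain l where l: "l < n" "v = x l \<bullet> G j" by auto
      have "g \<bullet> (x l - h) \<le> 0" using g S[OF l(1)] by (auto simp: normal_cone_def)
      then show "x i \<bullet> G j \<le> v" using l i g(2) by (simp add: inner_diff_right inner_commute)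
    qed
    then have "Min ?V = x i \<bullet> G j" using fin hin by (intro Min_eqI) auto
    then show ?thesis by simp
  qed
  then show ?thesis unfolding proto_output_def using i assms(2) by blast
qed


theorem theorem1:
  fixes x :: "nat \<Rightarrow> 'a::euclidean_space" and n m :: nat and \<delta> :: real
  defines "P \<equiv> convex hull (x ` {..<n})"
  defines "E \<equiv> {h. h extreme_point_of P}"
  defines "k \<equiv> card E"
  defines "\<kappa> \<equiv> 1 / ln (1 / Max ((\<lambda>h. 1 - 2 * solid_angle (normal_cone P h)) ` E))"
  assumes "0 < \<delta>" and "\<delta> < 1"
  assumes "0 < m"
  assumes "real m > \<kappa> * ln (real k / \<delta>)"
  shows "measure (PiM {..<m} (\<lambda>_. std_gaussian))
           {G \<in> space (PiM {..<m} (\<lambda>_. std_gaussian)). E \<subseteq> proto_output n x m G}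
         \<ge> 1 - \<delta>"
proof -
  interpret G: prob_space "std_gaussian :: 'a measure" by (rule prob_space_std_gaussian)
  define M where "M = PiM {..<m} (\<lambda>_. std_gaussian :: 'a measure)"
  interpret PM: prob_space M unfolding M_def by (rule prob_space_PiM) (rule prob_space_std_gaussian)
  define S where "S = x ` {..<n}"
  have fS: "finite S" by (simp add: S_def)
  have ES: "E \<subseteq> S" unfolding E_def P_def S_def using extreme_point_of_convex_hull by blast
  have fE: "finite E" using fS ES finite_subset by blast
  define Good where "Good = {G \<in> space M. E \<subseteq> proto_output n x m G}"
  have Geq: "Good = {G \<in> space M. \<forall>h\<in>E. \<exists>i\<in>{..<n}. \<exists>j\<in>{..<m}. h = x i \<and>
      (x i \<bullet> G j = Max ((\<lambda>l. x l \<bullet> G j) ` {..<n}) \<or> x i \<bullet> G j = Min ((\<lambda>l. x l \<bullet> G j) ` {..<n}))}"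
    unfolding Good_def proto_output_def by blast
  have Gmeas: "Good \<in> sets M" unfolding Geq M_def using fE by measurable
  have goal_eq: "measure (PiM {..<m} (\<lambda>_. std_gaussian))
           {G \<in> space (PiM {..<m} (\<lambda>_. std_gaussian)). E \<subseteq> proto_output n x m G} = measure M Good"
    by (simp add: M_def Good_def)
  have compl: "measure M Good = 1 - measure M (space M - Good)"
    using PM.prob_compl[OF Gmeas] by simp
  have hull_eq: "P = convex hull S" by (simp add: P_def S_def)
  show ?thesis
  proof (cases "\<exists>h\<in>E. S \<subseteq> {h}")
    case True
    then obtain h where h: "h \<in> E" "S \<subseteq> {h}" by blast
    have "Good = space M"
    proof (intro equalityI subsetI)
      fix G assume G: "G \<in> space M"
      have "E \<subseteq> {h}" using ES h by blast
      moreover have "h \<in> proto_output n x m G"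
      proof (rule hit_output)
        show "h extreme_point_of convex hull x ` {..<n}" using h(1) by (simp add: E_def P_def)
        show "0 < m" by fact
        have "normal_cone (convex hull x ` {..<n}) h = UNIV"
          using h(2) unfolding S_def by (auto simp: normal_cone_hull)
        then show "G 0 \<in> normal_cone (convex hull x ` {..<n}) h \<union> uminus ` normal_cone (convex hull x ` {..<n}) h"
          by simp
      qed
      ultimately show "G \<in> Good" using G by (auto simp: Good_def)
    qed (simp add: Good_def)
    then show ?thesis using goal_eq PM.prob_space assms(5) by simp
  next
    case False
    then have nd: "\<forall>h\<in>E. \<exists>y\<in>S. y \<noteq> h" by blast
    define N where "N h = normal_cone P h" for h
    define C where "C h = UNIV - (N h \<union> uminus ` N h)" for h
    define B where "B h = {G \<in> space M. \<forall>j<m. G j \<in> C h}" for h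
    have Cmeas: "C h \<in> sets borel" for h
    proof -
      have "closed (N h)" unfolding N_def by (rule normal_cone_closed)
      then have "closed (N h \<union> uminus ` N h)" by (intro closed_Un closed_negations)
      then have "N h \<union> uminus ` N h \<in> sets borel" by (rule borel_closed)
      then have "space borel - (N h \<union> uminus ` N h) \<in> sets borel" by (rule sets.compl_sets)
      then show ?thesis by (simp add: C_def)
    qed
    have Bmeas: "B h \<in> sets M" for h
      unfolding B_def M_def all_in_eq by (rule sets_PiM_I_finite) (simp, simp only: sets_std_gaussian Cmeas)
    have PB: "measure M (B h) = (1 - 2 * solid_angle (N h)) ^ m" if hE: "h \<in> E" for h
    proof -
      obtain y where y: "y \<in> S" "y \<noteq> h" using bspec[OF nd hE] by (elim bexE)
      have "measure M (B h) = (measure std_gaussian (C h)) ^ m"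
        unfolding M_def B_def by (rule PiM_all_in) (rule Cmeas)
      moreover have "measure std_gaussian (C h) = 1 - 2 * solid_angle (N h)"
        unfolding C_def N_def hull_eq by (rule q_eq[OF y])
      ultimately show ?thesis by simp
    qed
    have bad: "space M - Good \<subseteq> (\<Union>h\<in>E. B h)"
    proof
      fix G assume G: "G \<in> space M - Good"
      then obtain h where h: "h \<in> E" "h \<notin> proto_output n x m G" by (auto simp: Good_def)
      have "\<forall>j<m. G j \<in> C h"
      proof (intro allI impI)
        fix j assume j: "j < m"
        show "G j \<in> C h"
        proof (rule ccontr)
          assume "G j \<notin> C h"
          then have "G j \<in> N h \<union> uminus ` N h" by (simp add: C_def)
          then have "h \<in> proto_output n x m G"
            using hit_output[of h x n j m G] h(1) j by (simp add: N_def E_def P_def)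
          with h(2) show False by simp
        qed
      qed
      then show "G \<in> (\<Union>h\<in>E. B h)" using G h(1) by (auto simp: B_def)
    qed
    define q where "q h = 1 - 2 * solid_angle (N h)" for h
    have q_nn: "0 \<le> q h" if hE: "h \<in> E" for h
    proof -
      obtain y where y: "y \<in> S" "y \<noteq> h" using bspec[OF nd hE] by (elim bexE)
      have "q h = measure std_gaussian (C h)"
        unfolding q_def C_def N_def hull_eq by (rule q_eq[OF y, symmetric])
      then show ?thesis by simp
    qed
    have q_lt: "q h < 1" if "h \<in> E" for h
    proof -
      have "solid_angle (N h) > 0"
        unfolding N_def hull_eq using omega_pos[OF fS] that by (simp add: E_def hull_eq)
      then show ?thesis by (simp add: q_def)
    qed
    have sumle: "(\<Sum>h\<in>E. q h ^ m) \<le> \<delta>"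
    proof (cases "E = {}")
      case True then show ?thesis using assms(5) by simp
    next
      case ne: False
      define Q where "Q = Max (q ` E)"
      have QE: "Q \<in> q ` E" unfolding Q_def using fE ne by (intro Max_in) auto
      have qQ: "q h \<le> Q" if "h \<in> E" for h unfolding Q_def using fE that by (intro Max_ge) auto
      have Q0: "0 \<le> Q" using QE q_nn by auto
      have Q1: "Q < 1" using QE q_lt by auto
      have kap: "\<kappa> = 1 / ln (1 / Q)" unfolding \<kappa>_def Q_def q_def N_def ..
      have k1: "k \<ge> 1" using fE ne by (simp add: k_def Suc_le_eq card_gt_0_iff)
      have "(\<Sum>h\<in>E. q h ^ m) \<le> (\<Sum>h\<in>E. Q ^ m)"
        by (intro sum_mono power_mono qQ q_nn) auto
      also have "\<dots> = real k * Q ^ m" by (simp add: k_def)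
      also have "\<dots> \<le> \<delta>"
        by (rule key_arith[OF Q0 Q1 assms(5) k1 assms(7)]) (use assms(8) kap in simp)
      finally show ?thesis .
    qed
    have "measure M (space M - Good) \<le> measure M (\<Union>h\<in>E. B h)"
      using bad by (intro PM.finite_measure_mono) (use fE Bmeas in auto)
    also have "\<dots> \<le> (\<Sum>h\<in>E. measure M (B h))"
      using fE Bmeas by (intro PM.finite_measure_subadditive_finite) auto
    also have "\<dots> = (\<Sum>h\<in>E. q h ^ m)"
      by (intro sum.cong) (simp_all add: PB q_def)
    also have "\<dots> \<le> \<delta>" by (rule sumle)
    finally show ?thesis using goal_eq compl by simp
  qed
qed

end
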